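(* Let $A,B:(0,\infty)\to(0,\infty)$ be the functions $A=\tfrac r3\sqrt{1-r^{-3}}$, $B=\tfrac r{\sqrt3}$, where $r=r(t)\in(1,\infty)$ is determined by $\dot A=\tfrac12(1-A^2/B^2)$, $\dot B=A/B$ with $r\to1$ as $t\to0$. Consider the ODE system $$\dot f_+=\frac{f_+}{A}\Bigl(1-\frac{A^2}{B^2}-f_+\Bigr)+f_-^2\frac{A}{B^2},\qquad \dot f_-=\frac{2f_-}{A}(f_+-1).$$ If a solution $(f_+,f_-)$ lies in $\mathcal{R}_\infty=\{f_+>1,\ f_->1\}$ at some time $t_0>0$, then it cannot be uniformly bounded for all $t\ge t_0$.
   Context: $A$ and $B$ are the metric coefficients of the Bryant–Salamon $G_2$-metric on $\mathbf{S}(S^3)$, and the system is the $\mathrm{SU}(2)^3$-invariant $G_2$-instanton equation for $\mathrm{SU}(2)$-connections $f_+\sum_iE_i\otimes e_i^++f_-\sum_iE_i\otimes e_i^-$. "Cannot be uniformly bounded for all $t\ge t_0$" includes the possibility of blow-up in finite time. *)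

theory Defs
  imports Complex_Main
begin

definition BS_A :: "real \<Rightarrow> real" where
  "BS_A r = r / 3 * sqrt (1 - 1 / r ^ 3)"

definition BS_B :: "real \<Rightarrow> real" where
  "BS_B r = r / sqrt 3"

end

theory Submission imports Defs "HOL-Analysis.Analysis" begin

lemma at_within_ge: "t0 < (t::real) \<Longrightarrow> at t within {t0..} = at t"
  by (rule at_within_nhd[where S="{t0<..}"]) auto

lemma mono_within:
  fixes f f' :: "real \<Rightarrow> real"
  assumes d: "\<forall>t\<ge>t0. (f has_real_derivative f' t) (at t within {t0..})"
    and nn: "\<forall>t. a < t \<and> t < b \<longrightarrow> f' t \<ge> 0" and "t0 \<le> a" "a \<le> b"
  shows "f a \<le> f b"
proof (cases "a = b")
  case True then show ?thesis by simp
next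
  case False
  hence ab: "a < b" using assms by simp
  have c: "continuous_on {a..b} f"
    by (rule DERIV_continuous_on[where D=f'], rule DERIV_subset[of _ _ _ "{t0..}"]) (use d assms in auto)
  have dz: "(f has_real_derivative f' z) (at z)" if "a < z" "z < b" for z
    using d[rule_format, of z] at_within_ge[of t0 z] that assms by auto
  obtain l z where z: "a < z" "z < b" "DERIV f z :> l" "f b - f a = (b - a) * l"
    using MVT[OF ab c] dz by (meson real_differentiable_def)
  have "l = f' z" using DERIV_unique z dz by blast
  then show ?thesis using z nn ab by (smt (verit) mult_nonneg_nonneg)
qed

lemma alg:
  fixes x :: real assumes "x > 1"
  shows "BS_A x > 0" "BS_B x > 0" "BS_A x ^ 2 / BS_B x ^ 2 = (sqrt (1 - 1/x^3))^2 / 3"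
    "BS_A x / BS_B x ^ 2 = sqrt (1 - 1/x^3) / x"
    "BS_A x = x * sqrt (1 - 1/x^3) / 3"
    "sqrt 3 * (BS_A x / BS_B x) = sqrt (1 - 1/x^3)"
    "0 < sqrt (1 - 1/x^3)" "sqrt (1 - 1/x^3) < 1"
proof -
  have q: "0 < 1 - 1/x^3" "1 - 1/x^3 < 1" using assms by (auto simp: field_simps)
  have s3: "sqrt 3 * sqrt 3 = (3::real)" by simp
  show "BS_A x > 0" "BS_B x > 0" using q assms by (auto simp: BS_A_def BS_B_def)
  show "BS_A x ^ 2 / BS_B x ^ 2 = (sqrt (1 - 1/x^3))^2 / 3"
    using assms by (simp add: BS_A_def BS_B_def power_divide power_mult_distrib field_simps)
  show "BS_A x / BS_B x ^ 2 = sqrt (1 - 1/x^3) / x"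
    using assms by (simp add: BS_A_def BS_B_def power_divide power2_eq_square field_simps)
  show "BS_A x = x * sqrt (1 - 1/x^3) / 3" by (simp add: BS_A_def)
  show "sqrt 3 * (BS_A x / BS_B x) = sqrt (1 - 1/x^3)"
    using assms by (simp add: BS_A_def BS_B_def field_simps)
  show "0 < sqrt (1 - 1/x^3)" "sqrt (1 - 1/x^3) < 1" using q by auto
qed

lemma inv_div: "(K::real) * (inverse m * X) = K * (X / m)"
  by (simp add: divide_inverse mult.commute)

lemma e_gen:
  fixes A B x s p m K c M :: real
  assumes hA: "A = x * s / 3" and h2: "A^2 / B^2 = s^2 / 3" and h3: "A / B^2 = s / x" and hK: "K = M + 1"
  shows "(p / A * (1 - A\<^sup>2 / B\<^sup>2 - p) + m\<^sup>2 * A / B\<^sup>2)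
      + K * (inverse m * (2 * m / A * (p - 1)))
      - (c^2 - 1) * (inverse x * s)
      = p / (x * s / 3) * (1 - s^2/3 - p) + m^2 * (s/x)
        + (M+1) * ((2 * m/(x * s / 3) * (p-1))/m) - (c^2-1) * (s/x)"
proof -
  have 1: "m\<^sup>2 * A / B\<^sup>2 = m^2 * (s/x)" unfolding h3[symmetric] by (rule times_divide_eq_right[symmetric])
  have 3: "K * (inverse m * (2 * m / A * (p - 1))) = (M+1) * ((2 * m/(x * s / 3) * (p-1))/m)"
    unfolding hK hA by (simp only: divide_inverse mult.commute)
  have 4: "(c^2 - 1) * (inverse x * s) = (c^2-1) * (s/x)" by (simp only: divide_inverse mult.commute)
  have 2: "p / A * (1 - A\<^sup>2 / B\<^sup>2 - p) = p / (x * s / 3) * (1 - s^2/3 - p)"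
    unfolding h2 unfolding hA by (rule refl)
  show ?thesis by (simp only: 1 2 3 4)
qed

lemma key_eq:
  fixes x s p m c M :: real
  assumes "x > 0" "0 < s" "m > 0"
  shows "p / (x * s / 3) * (1 - s^2/3 - p) + m^2 * (s/x) + (M+1) * ((2 * m/(x * s / 3) * (p-1))/m)
          - (c^2-1) * (s/x) = (3 * p * (1 - s^2/3 - p) + m^2 * s^2 + 6 * (M+1) * (p-1) - (c^2-1) * s^2) / (x * s)"
proof -
  have "p / (x * s / 3) * (1 - s^2/3 - p) = 3 * p * (1 - s^2/3 - p) / (x * s)" by simp
  moreover have "m^2 * (s/x) = m^2 * s^2 / (x * s)" using assms by (simp add: power2_eq_square)
  moreover have "(M+1) * ((2 * m/(x * s / 3) * (p-1))/m) = 6 * (M+1) * (p-1) / (x * s)"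
  proof -
    have "(2 * m/(x * s / 3) * (p-1))/m = 6 * (p-1) / (x * s)" using assms by (simp add: field_simps)
    then show ?thesis by (simp add: algebra_simps)
  qed
  moreover have "(c^2-1) * (s/x) = (c^2-1) * s^2 / (x * s)" using assms by (simp add: power2_eq_square)
  ultimately show ?thesis by (simp add: diff_divide_distrib add_divide_distrib)
qed
lemma key:
  fixes x s p m c M :: real
  assumes "x > 0" "0 < s" "s < 1" "p > 1" "p \<le> M" "m \<ge> c" "c > 1"
  shows "p / (x * s / 3) * (1 - s^2/3 - p) + m^2 * (s/x) + (M+1) * ((2 * m/(x * s / 3) * (p-1))/m)
          - (c^2-1) * (s/x) \<ge> 0"
proof -
  have m0: "m > 0" using assms by simp
  have e: "p / (x * s / 3) * (1 - s^2/3 - p) + m^2 * (s/x) + (M+1) * ((2 * m/(x * s / 3) * (p-1))/m)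
          - (c^2-1) * (s/x) = (3 * p * (1 - s^2/3 - p) + m^2 * s^2 + 6 * (M+1) * (p-1) - (c^2-1) * s^2) / (x * s)"
    by (rule key_eq[OF assms(1,2) m0])
  have mc: "m^2 \<ge> c^2" using assms by (simp add: power_mono)
  have id: "3 * p * (1 - s^2/3 - p) + m^2 * s^2 + 6 * (M+1) * (p-1) - (c^2-1) * s^2
      = s^2 * (m^2 - c^2) + (s^2 * (1 - p)) + (p - 1) * (6 * M + 6 - 3 * p)"
    by (simp add: algebra_simps power2_eq_square)
  have t1: "s^2 * (m^2 - c^2) \<ge> 0" using mc by simp
  have s1: "s^2 \<le> 1" using assms by (simp add: power_le_one)
  have t2: "s^2 * (1 - p) \<ge> 1 - p" using s1 assms
  proof -
    have "(p-1)*(1-s^2) \<ge> 0" using s1 assms by simp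
    then show ?thesis by (simp add: algebra_simps)
  qed
  have t3: "(p - 1) * (6 * M + 6 - 3 * p) \<ge> (p-1)"
    using assms mult_left_mono[of 1 "6 * M + 6 - 3 * p" "p - 1"] by auto
  have "0 \<le> 3 * p * (1 - s^2/3 - p) + m^2 * s^2 + 6 * (M+1) * (p-1) - (c^2-1) * s^2"
    unfolding id using t1 t2 t3 by linarith
  then show ?thesis unfolding e using assms by simp
qed

theorem mainTheorem4:
  fixes r fp fm :: "real \<Rightarrow> real" and t0 :: real
  assumes r_gt1: "\<forall>t>0. r t > 1"
    and A_ode: "\<forall>t>0. ((\<lambda>s. BS_A (r s)) has_real_derivative
                  (1/2) * (1 - (BS_A (r t))\<^sup>2 / (BS_B (r t))\<^sup>2)) (at t)"
    and B_ode: "\<forall>t>0. ((\<lambda>s. BS_B (r s)) has_real_derivative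
                  BS_A (r t) / BS_B (r t)) (at t)"
    and r_init: "(r \<longlongrightarrow> 1) (at_right 0)"
    and t0_pos: "t0 > 0"
    and fp_ode: "\<forall>t\<ge>t0. (fp has_real_derivative
          fp t / BS_A (r t) * (1 - (BS_A (r t))\<^sup>2 / (BS_B (r t))\<^sup>2 - fp t)
          + (fm t)\<^sup>2 * BS_A (r t) / (BS_B (r t))\<^sup>2) (at t within {t0..})"
    and fm_ode: "\<forall>t\<ge>t0. (fm has_real_derivative
          2 * fm t / BS_A (r t) * (fp t - 1)) (at t within {t0..})"
    and init: "fp t0 > 1" "fm t0 > 1"
  shows "\<not> (\<exists>M. \<forall>t\<ge>t0. \<bar>fp t\<bar> \<le> M \<and> \<bar>fm t\<bar> \<le> M)"
proof
  assume "\<exists>M. \<forall>t\<ge>t0. \<bar>fp t\<bar> \<le> M \<and> \<bar>fm t\<bar> \<le> M"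
  then obtain M where Mb: "\<forall>t\<ge>t0. \<bar>fp t\<bar> \<le> M \<and> \<bar>fm t\<bar> \<le> M" by blast
  define sq where "sq x = sqrt (1 - 1/x^3)" for x :: real
  have rt: "r t > 1" if "t \<ge> t0" for t using r_gt1 t0_pos that by auto
  have rd: "(r has_real_derivative sq (r t)) (at t)" if t: "t > 0" for t
  proof -
    have "((\<lambda>s. sqrt 3 * BS_B (r s)) has_real_derivative sqrt 3 * (BS_A (r t) / BS_B (r t))) (at t)"
      using B_ode t by (intro DERIV_cmult) auto
    moreover have "(\<lambda>s. sqrt 3 * BS_B (r s)) = r" by (auto simp: BS_B_def)
    ultimately show ?thesis using alg(6)[of "r t"] r_gt1 t by (simp add: sq_def)
  qed
  have sqpos: "sq x > 0" if "x > 1" for x using alg(7)[OF that] by (simp add: sq_def)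
  have sqmono: "sq y \<le> sq x" if "1 < y" "y \<le> x" for x y
  proof -
    have "y^3 \<le> x^3" using that by (simp add: power_mono)
    then have "1/x^3 \<le> 1/y^3" using that by (simp add: frac_le)
    then show ?thesis unfolding sq_def by simp
  qed
  have rmono: "r t0 \<le> r t" if "t \<ge> t0" for t
  proof (rule DERIV_nonneg_imp_nondecreasing[OF that])
    fix x assume x: "t0 \<le> x" "x \<le> t"
    then have "x > 0" "r x > 1" using t0_pos r_gt1 by auto
    then show "\<exists>y. (r has_real_derivative y) (at x) \<and> 0 \<le> y"
      using rd sqpos less_imp_le by blast
  qed
  define \<delta> where "\<delta> = sq (r t0)"
  have \<delta>pos: "\<delta> > 0" unfolding \<delta>_def using sqpos rt by auto
  have rlin: "r t0 + \<delta> * (t - t0) \<le> r t" if "t \<ge> t0" for t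
  proof -
    have "(\<lambda>s. r s - \<delta> * s) t0 \<le> (\<lambda>s. r s - \<delta> * s) t"
    proof (rule DERIV_nonneg_imp_nondecreasing[OF that])
      fix x assume x: "t0 \<le> x" "x \<le> t"
      have "((\<lambda>s. r s - \<delta> * s) has_real_derivative sq (r x) - \<delta> * 1) (at x)"
        using x t0_pos by (intro DERIV_diff DERIV_cmult rd DERIV_ident) auto
      moreover have "sq (r x) - \<delta> * 1 \<ge> 0" unfolding \<delta>_def using sqmono rt rmono x by auto
      ultimately show "\<exists>y. ((\<lambda>s. r s - \<delta> * s) has_real_derivative y) (at x) \<and> 0 \<le> y" by blast
    qed
    then show ?thesis by (simp add: algebra_simps)
  qed
  have cfp: "continuous_on {t0..} fp"
    unfolding continuous_on_eq_continuous_within using fp_ode DERIV_continuous by blast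
  have cfm: "continuous_on {t0..} fm"
    unfolding continuous_on_eq_continuous_within using fm_ode DERIV_continuous by blast
  have fmd_nn: "2 * fm t / BS_A (r t) * (fp t - 1) \<ge> 0" if "t \<ge> t0" "fp t > 1" "fm t > 1" for t
    using alg(1)[OF rt[OF that(1)]] that by simp
  have inv: "\<forall>t\<ge>t0. fp t > 1 \<and> fm t > 1"
  proof (rule ccontr)
    assume "\<not> (\<forall>t\<ge>t0. fp t > 1 \<and> fm t > 1)"
    then obtain t1 where t1: "t1 \<ge> t0" "fp t1 \<le> 1 \<or> fm t1 \<le> 1" by force
    define S where "S = {t0..} \<inter> (\<lambda>t. min (fp t) (fm t)) -` {..1}"
    have Sne: "t1 \<in> S" using t1 by (auto simp: S_def)
    have Scl: "closed S" unfolding S_def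
      by (intro continuous_closed_preimage continuous_on_min cfp cfm) auto
    have Sbd: "bdd_below S" by (auto simp: S_def bdd_below_def)
    define \<tau> where "\<tau> = Inf S"
    have \<tau>S: "\<tau> \<in> S" unfolding \<tau>_def using closed_contains_Inf Sne Scl Sbd by blast
    have below: "fp t > 1 \<and> fm t > 1" if "t0 \<le> t" "t < \<tau>" for t
    proof (rule ccontr)
      assume "\<not> ?thesis"
      then have "t \<in> S" using that by (auto simp: S_def)
      then have "\<tau> \<le> t" unfolding \<tau>_def using Sbd by (rule cInf_lower)
      then show False using that by simp
    qed
    have \<tau>ge: "\<tau> \<ge> t0" "min (fp \<tau>) (fm \<tau>) \<le> 1" using \<tau>S by (auto simp: S_def)
    have \<tau>gt: "\<tau> > t0" using \<tau>ge init by (cases "\<tau> = t0") auto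
    have "fm t0 \<le> fm \<tau>"
      by (rule mono_within[OF fm_ode _ order.refl \<tau>ge(1)]) (use below fmd_nn in auto)
    then have fm\<tau>: "fm \<tau> > 1" using init by simp
    then have fp\<tau>1: "fp \<tau> \<le> 1" using \<tau>ge by simp
    have atw: "at \<tau> within {t0..} = at \<tau>" using \<tau>gt by (rule at_within_ge)
    have fpd: "(fp has_real_derivative
          fp \<tau> / BS_A (r \<tau>) * (1 - (BS_A (r \<tau>))\<^sup>2 / (BS_B (r \<tau>))\<^sup>2 - fp \<tau>)
          + (fm \<tau>)\<^sup>2 * BS_A (r \<tau>) / (BS_B (r \<tau>))\<^sup>2) (at \<tau>)"
      using fp_ode \<tau>ge atw by auto
    have "isCont fp \<tau>" using fpd by (rule DERIV_isCont)
    then have lim: "(fp \<longlongrightarrow> fp \<tau>) (at_left \<tau>)"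
      by (simp add: isCont_def filterlim_at_split)
    have ev: "eventually (\<lambda>t. 1 \<le> fp t) (at_left \<tau>)"
    proof -
      have "eventually (\<lambda>t. t \<in> {t0<..<\<tau>}) (at_left \<tau>)" using \<tau>gt by (rule eventually_at_left_real)
      then show ?thesis by eventually_elim (use below in \<open>auto intro: less_imp_le\<close>)
    qed
    have "1 \<le> fp \<tau>" by (rule tendsto_lowerbound[OF lim ev]) simp
    then have fp\<tau>: "fp \<tau> = 1" using fp\<tau>1 by simp
    have r\<tau>: "r \<tau> > 1" using rt \<tau>ge by simp
    have "fp \<tau> / BS_A (r \<tau>) * (1 - (BS_A (r \<tau>))\<^sup>2 / (BS_B (r \<tau>))\<^sup>2 - fp \<tau>)
          + (fm \<tau>)\<^sup>2 * BS_A (r \<tau>) / (BS_B (r \<tau>))\<^sup>2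
        = ((fm \<tau>)\<^sup>2 - 1) * (BS_A (r \<tau>) / (BS_B (r \<tau>))\<^sup>2)"
      using fp\<tau> alg(1,2)[OF r\<tau>] by (simp add: field_simps power2_eq_square)
    also have "\<dots> > 0"
    proof -
      have "(fm \<tau>)\<^sup>2 > 1" using fm\<tau> by (simp add: one_less_power)
      then show ?thesis using alg(1,2)[OF r\<tau>] by simp
    qed
    finally obtain d where d: "d > 0" "\<forall>h>0. h < d \<longrightarrow> fp (\<tau> - h) < fp \<tau>"
      using DERIV_pos_inc_left[OF fpd] by blast
    define h where "h = min (d/2) ((\<tau> - t0)/2)"
    have hb: "h > 0" "h < d" "t0 \<le> \<tau> - h" "\<tau> - h < \<tau>" using d(1) \<tau>gt unfolding h_def by (auto simp: min_def field_simps)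
    have "fp (\<tau> - h) < 1" using d hb fp\<tau> by auto
    moreover have "fp (\<tau> - h) > 1" using below[OF hb(3,4)] by simp
    ultimately show False by simp
  qed
  define c where "c = fm t0"
  have fmc: "c \<le> fm t" if "t \<ge> t0" for t
    unfolding c_def
    by (rule mono_within[OF fm_ode _ order.refl that]) (use inv fmd_nn in auto)
  define K where "K = M + 1"
  define \<Phi> where "\<Phi> t = fp t + K * ln (fm t) - (c^2 - 1) * ln (r t)" for t
  define D where "D t = (fp t / BS_A (r t) * (1 - (BS_A (r t))\<^sup>2 / (BS_B (r t))\<^sup>2 - fp t)
          + (fm t)\<^sup>2 * BS_A (r t) / (BS_B (r t))\<^sup>2)
      + K * (inverse (fm t) * (2 * fm t / BS_A (r t) * (fp t - 1)))
      - (c^2 - 1) * (inverse (r t) * sq (r t))" for t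
  have \<Phi>d: "\<forall>t\<ge>t0. (\<Phi> has_real_derivative D t) (at t within {t0..})"
  proof (intro allI impI)
    fix t assume t: "t \<ge> t0"
    have fm0: "fm t > 0" using inv t by auto
    have r0: "r t > 0" using rt[OF t] by simp
    have rdw: "(r has_real_derivative sq (r t)) (at t within {t0..})"
      using rd[of t] t t0_pos by (auto intro: has_field_derivative_at_within)
    have l1: "((\<lambda>s. ln (fm s)) has_real_derivative inverse (fm t) * (2 * fm t / BS_A (r t) * (fp t - 1))) (at t within {t0..})"
      by (rule DERIV_chain2[OF DERIV_ln[OF fm0] fm_ode[rule_format, OF t]])
    have l2: "((\<lambda>s. ln (r s)) has_real_derivative inverse (r t) * sq (r t)) (at t within {t0..})"
      by (rule DERIV_chain2[OF DERIV_ln[OF r0] rdw])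
    have "((\<lambda>s. fp s + K * ln (fm s) - (c^2 - 1) * ln (r s)) has_real_derivative D t) (at t within {t0..})"
      unfolding D_def
      by (rule DERIV_diff[OF DERIV_add[OF fp_ode[rule_format, OF t] DERIV_cmult[OF l1]] DERIV_cmult[OF l2]])
    then show "(\<Phi> has_real_derivative D t) (at t within {t0..})" unfolding \<Phi>_def[abs_def] .
  qed
  have \<Phi>nn: "\<forall>t. t0 < t \<and> t < T \<longrightarrow> 0 \<le> D t" for T
  proof (intro allI impI)
    fix t assume "t0 < t \<and> t < T"
    then have t': "t \<ge> t0" by simp
    have x: "r t > 1" using rt t' by simp
    have M: "fp t \<le> M" using Mb t' by auto
    have e: "D t
      = fp t / (r t * sq (r t) / 3) * (1 - (sq (r t))^2/3 - fp t) + (fm t)^2 * (sq (r t)/r t)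
        + (M+1) * ((2 * fm t/(r t * sq (r t) / 3) * (fp t-1))/fm t) - (c^2-1) * (sq (r t)/r t)"
      unfolding D_def sq_def by (rule e_gen[OF alg(5)[OF x] alg(3)[OF x] alg(4)[OF x] K_def])
    have x0: "r t > 0" using x by simp
    have s0: "0 < sq (r t)" using sqpos x by simp
    have s1: "sq (r t) < 1" using alg(8)[OF x] by (simp add: sq_def)
    have p1: "fp t > 1" using inv t' by simp
    have mc: "c \<le> fm t" using fmc t' by simp
    have c1: "c > 1" using init c_def by simp
    show "0 \<le> D t" unfolding e by (rule key[OF x0 s0 s1 p1 M mc c1])
  qed
  have \<Phi>mono: "\<Phi> t0 \<le> \<Phi> t" if "t \<ge> t0" for t
    by (rule mono_within[OF \<Phi>d \<Phi>nn order.refl that])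
  define C where "C = M + K * ln M - \<Phi> t0"
  have c1: "c^2 - 1 > 0" using init unfolding c_def by (simp add: one_less_power)
  have bnd: "(c^2 - 1) * ln (r t) \<le> C" if "t \<ge> t0" for t
  proof -
    have "fp t \<le> M" "fm t \<le> M" "fm t > 0" using Mb inv that by auto
    then have "ln (fm t) \<le> ln M" by simp
    moreover have "K \<ge> 0" unfolding K_def using \<open>fp t \<le> M\<close> inv that by force
    ultimately have "K * ln (fm t) \<le> K * ln M" by (simp add: mult_left_mono)
    then show ?thesis using \<Phi>mono[OF that] \<open>fp t \<le> M\<close> unfolding C_def \<Phi>_def by simp
  qed
  define E where "E = exp (C / (c^2 - 1))"
  define t1 where "t1 = t0 + E / \<delta>"
  have t1: "t1 \<ge> t0" unfolding t1_def E_def using \<delta>pos by simp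
  have "\<delta> * (t1 - t0) = E" unfolding t1_def using \<delta>pos by simp
  then have "r t1 \<ge> r t0 + E" using rlin[OF t1] by simp
  moreover have "r t0 > 1" using rt[of t0] by simp
  ultimately have rE: "E < r t1" by simp
  have Ep: "0 < E" unfolding E_def by simp
  have "ln E < ln (r t1)" using ln_less_cancel_iff[OF Ep] rE Ep by simp
  then have "C / (c^2 - 1) < ln (r t1)" unfolding E_def by simp
  then have "(c^2 - 1) * ln (r t1) > C" using c1 by (simp add: pos_divide_less_eq mult.commute)
  then show False using bnd[OF t1] by simp
qed

end
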